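(* As $t\to\infty$, $\mathrm{Prob}\big([Z^{(1)}_t-\alpha,Z^{(1)}_t+\alpha]\cap\mathbb N\subseteq D\big)\to1$.
   Context: Fix $\alpha\ge 2$. Let $(\xi_0(z))_{z\in\mathbb Z}$ be i.i.d. Pareto with $\mathrm{Prob}(\xi_0(z)>x)=x^{-\alpha}$, $x\ge1$. Let $p:\mathbb N\to[0,1]$ be eventually nondecreasing with $p(n)\to1$, $q=1-p$. Define $\xi(n)=\xi_0(n)$ for $n\ge0$ and, independently for each $n\ge1$, $\xi(-n)=\xi_0(n)$ with probability $p(n)$, $\xi(-n)=\xi_0(-n)$ with probability $q(n)$. Let $D=\{z\in\mathbb N_0:\xi(z)=\xi(-z)\}$, $\Psi_t(z)=\xi(z)-\frac{|z|}{t}\log\xi(z)$, and $Z^{(1)}_t$ a maximiser of $\Psi_t$ over $D$. *)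

theory Defs
  imports "HOL-Probability.Probability"
begin

definition xi :: "(int \<Rightarrow> 'a \<Rightarrow> real) \<Rightarrow> (nat \<Rightarrow> 'a \<Rightarrow> bool) \<Rightarrow> int \<Rightarrow> 'a \<Rightarrow> real" where
  "xi xi0 coin z \<omega> =
     (if z \<ge> 0 then xi0 z \<omega>
      else if coin (nat (- z)) \<omega> then xi0 (- z) \<omega> else xi0 z \<omega>)"

definition Dset :: "(int \<Rightarrow> 'a \<Rightarrow> real) \<Rightarrow> (nat \<Rightarrow> 'a \<Rightarrow> bool) \<Rightarrow> 'a \<Rightarrow> nat set" where
  "Dset xi0 coin \<omega> = {z. xi xi0 coin (int z) \<omega> = xi xi0 coin (- int z) \<omega>}"

definition Psi :: "(int \<Rightarrow> 'a \<Rightarrow> real) \<Rightarrow> (nat \<Rightarrow> 'a \<Rightarrow> bool) \<Rightarrow> real \<Rightarrow> nat \<Rightarrow> 'a \<Rightarrow> real" where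
  "Psi xi0 coin t z \<omega> = xi xi0 coin (int z) \<omega> - real z / t * ln (xi xi0 coin (int z) \<omega>)"

definition is_max_D :: "(int \<Rightarrow> 'a \<Rightarrow> real) \<Rightarrow> (nat \<Rightarrow> 'a \<Rightarrow> bool) \<Rightarrow> real \<Rightarrow> 'a \<Rightarrow> nat \<Rightarrow> bool" where
  "is_max_D xi0 coin t \<omega> z \<longleftrightarrow> z \<in> Dset xi0 coin \<omega> \<and>
     (\<forall>y \<in> Dset xi0 coin \<omega>. Psi xi0 coin t y \<omega> \<le> Psi xi0 coin t z \<omega>)"

definition good_event :: "(int \<Rightarrow> 'a \<Rightarrow> real) \<Rightarrow> (nat \<Rightarrow> 'a \<Rightarrow> bool) \<Rightarrow> real \<Rightarrow> real \<Rightarrow> 'a \<Rightarrow> bool" where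
  "good_event xi0 coin \<alpha> t \<omega> \<longleftrightarrow>
     (\<exists>z. is_max_D xi0 coin t \<omega> z) \<and>
     (\<forall>z. is_max_D xi0 coin t \<omega> z \<longrightarrow>
        (\<forall>y::nat. 1 \<le> y \<and> real z - \<alpha> \<le> real y \<and> real y \<le> real z + \<alpha> \<longrightarrow> y \<in> Dset xi0 coin \<omega>))"

end

theory Submission
  imports Defs
begin

lemma xi_nat[simp]: "xi xi0 coin (int z) \<omega> = xi0 (int z) \<omega>"
  by (simp add: xi_def)

lemma Psi_nat: "Psi xi0 coin t z \<omega> = xi0 (int z) \<omega> - real z / t * ln (xi0 (int z) \<omega>)"
  by (simp add: Psi_def)

lemma Psi_coin_indep: "Psi xi0 coin t z \<omega> = Psi xi0 coin' t z \<omega>"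
  by (simp add: Psi_def)

lemma Dset_char: "z \<in> Dset xi0 coin \<omega> \<longleftrightarrow> (z = 0 \<or> coin z \<omega> \<or> xi0 (int z) \<omega> = xi0 (- int z) \<omega>)"
proof (cases "z = 0")
  case True then show ?thesis by (simp add: Dset_def xi_def)
next
  case False
  then have "xi xi0 coin (- int z) \<omega> = (if coin z \<omega> then xi0 (int z) \<omega> else xi0 (- int z) \<omega>)"
    by (simp add: xi_def)
  moreover have "xi xi0 coin (int z) \<omega> = xi0 (int z) \<omega>" by (simp add: xi_def)
  ultimately show ?thesis using False by (simp add: Dset_def)
qed

lemma D0: "0 \<in> Dset xi0 coin \<omega>"
  by (simp add: Dset_char)

lemma Dcoin: "coin z \<omega> \<Longrightarrow> z \<in> Dset xi0 coin \<omega>"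
  by (simp add: Dset_char)

lemma notD: "1 \<le> z \<Longrightarrow> z \<notin> Dset xi0 coin \<omega> \<Longrightarrow> \<not> coin z \<omega>"
  by (auto simp: Dset_char)

definition AYp :: "real \<Rightarrow> (int \<Rightarrow> 'a \<Rightarrow> real) \<Rightarrow> (nat \<Rightarrow> 'a \<Rightarrow> bool) \<Rightarrow> real \<Rightarrow> nat \<Rightarrow> 'a \<Rightarrow> bool" where
  "AYp \<alpha> xi0 coin t y \<omega> \<longleftrightarrow> (\<exists>z. \<bar>real z - real y\<bar> \<le> \<alpha> \<and> z \<in> Dset xi0 coin \<omega> - {y} \<and>
      (\<forall>w \<in> Dset xi0 coin \<omega> - {y}. Psi xi0 coin t w \<omega> \<le> Psi xi0 coin t z \<omega>))"

definition NTp :: "(int \<Rightarrow> 'a \<Rightarrow> real) \<Rightarrow> real \<Rightarrow> 'a \<Rightarrow> bool" where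
  "NTp xi0 t \<omega> \<longleftrightarrow> (\<forall>z1 z2::nat. z1 \<noteq> z2 \<longrightarrow>
      xi0 (int z1) \<omega> - real z1 / t * ln (xi0 (int z1) \<omega>) \<noteq> xi0 (int z2) \<omega> - real z2 / t * ln (xi0 (int z2) \<omega>))"

definition coinm :: "nat \<Rightarrow> (nat \<Rightarrow> 'a \<Rightarrow> bool) \<Rightarrow> nat \<Rightarrow> 'a \<Rightarrow> bool" where
  "coinm y coin n \<omega> = (n \<noteq> y \<and> coin n \<omega>)"

lemma Dset_coinm: "Dset xi0 (coinm y coin) \<omega> - {y} = Dset xi0 coin \<omega> - {y}"
  by (auto simp: Dset_char coinm_def)

lemma AYp_coinm: "AYp \<alpha> xi0 (coinm y coin) t y \<omega> = AYp \<alpha> xi0 coin t y \<omega>"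
  unfolding AYp_def Dset_coinm by (simp add: Psi_def)

lemma exists_max:
  assumes x0: "xi0 0 \<omega> > 1" and fin: "finite {z. Psi xi0 coin t z \<omega> > 1}"
  shows "\<exists>z. is_max_D xi0 coin t \<omega> z"
proof -
  define S where "S = {z \<in> Dset xi0 coin \<omega>. Psi xi0 coin t z \<omega> \<ge> Psi xi0 coin t 0 \<omega>}"
  have P0: "Psi xi0 coin t 0 \<omega> = xi0 0 \<omega>" by (simp add: Psi_def xi_def)
  have "S \<subseteq> {z. Psi xi0 coin t z \<omega> > 1}" using x0 P0 by (auto simp: S_def)
  then have fS: "finite S" using fin by (rule finite_subset)
  have "0 \<in> S" using D0 by (auto simp: S_def)
  then have ne: "S \<noteq> {}" by auto
  obtain z where zS: "z \<in> S" and zmax: "\<forall>y\<in>S. Psi xi0 coin t y \<omega> \<le> Psi xi0 coin t z \<omega>"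
    using fS ne
  proof -
    have "\<exists>z\<in>S. \<forall>y\<in>S. Psi xi0 coin t y \<omega> \<le> Psi xi0 coin t z \<omega>"
    proof -
      let ?m = "Max ((\<lambda>y. Psi xi0 coin t y \<omega>) ` S)"
      have "?m \<in> (\<lambda>y. Psi xi0 coin t y \<omega>) ` S" using fS ne by (intro Max_in) auto
      then obtain z where "z \<in> S" "Psi xi0 coin t z \<omega> = ?m" by auto
      moreover have "\<forall>y\<in>S. Psi xi0 coin t y \<omega> \<le> ?m" using fS by auto
      ultimately show ?thesis by (intro bexI[of _ z]) simp_all
    qed
    then show ?thesis using that by blast
  qed
  have "is_max_D xi0 coin t \<omega> z"
    unfolding is_max_D_def
  proof (intro conjI ballI)
    show "z \<in> Dset xi0 coin \<omega>" using zS by (auto simp: S_def)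
    fix y assume y: "y \<in> Dset xi0 coin \<omega>"
    show "Psi xi0 coin t y \<omega> \<le> Psi xi0 coin t z \<omega>"
    proof (cases "y \<in> S")
      case True then show ?thesis using zmax by auto
    next
      case False
      then have "Psi xi0 coin t y \<omega> < Psi xi0 coin t 0 \<omega>" using y by (auto simp: S_def)
      also have "\<dots> \<le> Psi xi0 coin t z \<omega>" using zS by (auto simp: S_def)
      finally show ?thesis by simp
    qed
  qed
  then show ?thesis by blast
qed

lemma good_det:
  assumes x0: "xi0 0 \<omega> > 1" and fin: "finite {z. Psi xi0 coin t z \<omega> > 1}"
    and far: "\<forall>z. is_max_D xi0 coin t \<omega> z \<longrightarrow> K \<le> z"
    and K: "real Nd + \<alpha> \<le> real K"
    and noBad: "\<forall>y\<ge>Nd. coin y \<omega> \<or> \<not> AYp \<alpha> xi0 coin t y \<omega>"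
  shows "good_event xi0 coin \<alpha> t \<omega>"
  unfolding good_event_def
proof (intro conjI allI impI)
  show "\<exists>z. is_max_D xi0 coin t \<omega> z" using exists_max[OF x0 fin] .
  fix z y assume zm: "is_max_D xi0 coin t \<omega> z"
    and y: "1 \<le> y \<and> real z - \<alpha> \<le> real y \<and> real y \<le> real z + \<alpha>"
  show "y \<in> Dset xi0 coin \<omega>"
  proof (rule ccontr)
    assume yn: "y \<notin> Dset xi0 coin \<omega>"
    then have nc: "\<not> coin y \<omega>" using notD[of y xi0 coin \<omega>] y by simp
    have "K \<le> z" using far zm by blast
    then have "Nd \<le> y" using K y by linarith
    then have "\<not> AYp \<alpha> xi0 coin t y \<omega>" using noBad nc by blast
    moreover have "AYp \<alpha> xi0 coin t y \<omega>"
      unfolding AYp_def using zm y yn unfolding is_max_D_def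
      by (intro exI[of _ z]) (auto simp: abs_le_iff)
    ultimately show False by blast
  qed
qed

lemma count_det:
  assumes nt: "NTp xi0 t \<omega>"
  shows "\<exists>c. {y. AYp \<alpha> xi0 coin t y \<omega>} \<subseteq> {c - nat \<lceil>\<alpha>\<rceil> .. c + nat \<lceil>\<alpha>\<rceil>}"
proof (cases "\<exists>z. is_max_D xi0 coin t \<omega> z")
  case True
  then obtain zs where zs: "is_max_D xi0 coin t \<omega> zs" by blast
  have inj: "Psi xi0 coin t a \<omega> = Psi xi0 coin t b \<omega> \<Longrightarrow> a = b" for a b
    using nt unfolding NTp_def Psi_nat by blast
  show ?thesis
  proof (intro exI subsetI)
    fix y assume "y \<in> {y. AYp \<alpha> xi0 coin t y \<omega>}"
    then obtain z where z: "\<bar>real z - real y\<bar> \<le> \<alpha>" "z \<in> Dset xi0 coin \<omega> - {y}"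
      "\<forall>w \<in> Dset xi0 coin \<omega> - {y}. Psi xi0 coin t w \<omega> \<le> Psi xi0 coin t z \<omega>"
      unfolding AYp_def by blast
    have "\<bar>real zs - real y\<bar> \<le> \<alpha>"
    proof (cases "y = zs")
      case True then show ?thesis using z(1) by (smt (verit))
    next
      case False
      then have "zs \<in> Dset xi0 coin \<omega> - {y}" using zs by (auto simp: is_max_D_def)
      then have "Psi xi0 coin t zs \<omega> \<le> Psi xi0 coin t z \<omega>" using z(3) by blast
      moreover have "Psi xi0 coin t z \<omega> \<le> Psi xi0 coin t zs \<omega>" using zs z(2) by (auto simp: is_max_D_def)
      ultimately have "z = zs" using inj by force
      then show ?thesis using z(1) by simp
    qed
    moreover have "\<alpha> \<le> real (nat \<lceil>\<alpha>\<rceil>)" by linarith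
    ultimately have "real y \<le> real zs + real (nat \<lceil>\<alpha>\<rceil>)" "real zs \<le> real y + real (nat \<lceil>\<alpha>\<rceil>)"
      by (simp_all only: abs_le_iff) linarith+
    then have "real y \<le> real (zs + nat \<lceil>\<alpha>\<rceil>)" "real zs \<le> real (y + nat \<lceil>\<alpha>\<rceil>)"
      by (simp_all only: of_nat_add)
    then have "y \<le> zs + nat \<lceil>\<alpha>\<rceil>" "zs \<le> y + nat \<lceil>\<alpha>\<rceil>" by (simp_all only: of_nat_le_iff)
    then show "y \<in> {zs - nat \<lceil>\<alpha>\<rceil> .. zs + nat \<lceil>\<alpha>\<rceil>}" by auto
  qed
next
  case False
  have "\<not> AYp \<alpha> xi0 coin t y \<omega>" for y
  proof
    assume "AYp \<alpha> xi0 coin t y \<omega>"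
    then obtain z where z: "z \<in> Dset xi0 coin \<omega> - {y}"
      "\<forall>w \<in> Dset xi0 coin \<omega> - {y}. Psi xi0 coin t w \<omega> \<le> Psi xi0 coin t z \<omega>"
      unfolding AYp_def by blast
    show False
    proof (cases "y \<in> Dset xi0 coin \<omega> \<and> Psi xi0 coin t z \<omega> < Psi xi0 coin t y \<omega>")
      case True
      have "is_max_D xi0 coin t \<omega> y" unfolding is_max_D_def
      proof (intro conjI ballI)
        show "y \<in> Dset xi0 coin \<omega>" using True by blast
        fix w assume "w \<in> Dset xi0 coin \<omega>"
        then show "Psi xi0 coin t w \<omega> \<le> Psi xi0 coin t y \<omega>"
          using z(2) True by (cases "w = y") force+
      qed
      then show False using False by blast
    next
      case False2: False
      have "is_max_D xi0 coin t \<omega> z" unfolding is_max_D_def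
      proof (intro conjI ballI)
        show "z \<in> Dset xi0 coin \<omega>" using z by blast
        fix w assume "w \<in> Dset xi0 coin \<omega>"
        then show "Psi xi0 coin t w \<omega> \<le> Psi xi0 coin t z \<omega>"
          using z(2) False2 by (cases "w = y") force+
      qed
      then show False using False by blast
    qed
  qed
  then show ?thesis by auto
qed

context
  fixes N :: "'b measure" and xi0' :: "int \<Rightarrow> 'b \<Rightarrow> real" and coin' :: "nat \<Rightarrow> 'b \<Rightarrow> bool"
  assumes xm[measurable]: "\<And>z. xi0' z \<in> borel_measurable N"
     and cm[measurable]: "\<And>n. coin' n \<in> measurable N (count_space UNIV)"
begin

lemma xi_meas_g[measurable]: "xi xi0' coin' z \<in> borel_measurable N"
proof -
  have "xi xi0' coin' z = (if z \<ge> 0 then xi0' z else (\<lambda>\<omega>. if coin' (nat (- z)) \<omega> then xi0' (- z) \<omega> else xi0' z \<omega>))"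
    by (auto simp: xi_def fun_eq_iff)
  also have "\<dots> \<in> borel_measurable N" by (cases "z \<ge> 0") (simp_all, measurable)
  finally show ?thesis .
qed

lemma Psi_meas_g[measurable]: "Psi xi0' coin' t z \<in> borel_measurable N"
  unfolding Psi_def by measurable

lemma Dset_meas_g[measurable]: "{\<omega>\<in>space N. z \<in> Dset xi0' coin' \<omega>} \<in> sets N"
  unfolding Dset_def by measurable

lemma ismax_meas_g[measurable]: "{\<omega>\<in>space N. is_max_D xi0' coin' t \<omega> z} \<in> sets N"
  unfolding is_max_D_def Ball_def by measurable

lemma good_meas_g[measurable]: "{\<omega>\<in>space N. good_event xi0' coin' \<alpha> t \<omega>} \<in> sets N"
  unfolding good_event_def by measurable

lemma AYp_meas_g[measurable]: "{\<omega>\<in>space N. AYp \<alpha> xi0' coin' t y \<omega>} \<in> sets N"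
  unfolding AYp_def Ball_def Diff_iff singleton_iff by measurable

lemma NTp_meas_g[measurable]: "{\<omega>\<in>space N. NTp xi0' t \<omega>} \<in> sets N"
  unfolding NTp_def by measurable

end

locale L = prob_space M for M :: "'a measure" +
  fixes \<alpha> :: real and p :: "nat \<Rightarrow> real"
    and xi0 :: "int \<Rightarrow> 'a \<Rightarrow> real" and coin :: "nat \<Rightarrow> 'a \<Rightarrow> bool"
  assumes a2: "\<alpha> \<ge> 2"
    and p01: "\<forall>n. 0 \<le> p n \<and> p n \<le> 1"
    and plim: "p \<longlonglongrightarrow> 1"
    and ind: "indep_vars (\<lambda>_. borel)
           (\<lambda>i. case i of Inl z \<Rightarrow> xi0 z | Inr n \<Rightarrow> (\<lambda>\<omega>. of_bool (coin n \<omega>)))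
           (UNIV :: (int + nat) set)"
    and tail: "\<forall>z. \<forall>x\<ge>1. measure M {\<omega> \<in> space M. xi0 z \<omega> > x} = x powr (- \<alpha>)"
    and pc: "\<forall>n\<ge>1. measure M {\<omega> \<in> space M. coin n \<omega>} = p n"
begin

definition X where "X = (\<lambda>i. case i of Inl z \<Rightarrow> xi0 z | Inr n \<Rightarrow> (\<lambda>\<omega>. of_bool (coin n \<omega>)))"

lemma indX: "indep_vars (\<lambda>_. borel) X UNIV" using ind unfolding X_def .

lemma rvX: "X i \<in> borel_measurable M"
  using indX unfolding indep_vars_def by auto

lemma xi0_meas[measurable]: "xi0 z \<in> borel_measurable M"
  using rvX[of "Inl z"] by (simp add: X_def)

lemma coin_meas[measurable]: "coin n \<in> measurable M (count_space UNIV)"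
proof -
  have "(\<lambda>\<omega>. of_bool (coin n \<omega>) :: real) \<in> borel_measurable M"
    using rvX[of "Inr n"] by (simp add: X_def)
  then have "{\<omega>\<in>space M. (of_bool (coin n \<omega>)::real) = 1} \<in> sets M" by measurable
  then have "{\<omega>\<in>space M. coin n \<omega>} \<in> sets M" by (simp)
  then show ?thesis by (simp add: pred_def[symmetric] )
qed

lemmas xi_meas[measurable] = xi_meas_g[OF xi0_meas coin_meas]
lemmas Psi_meas[measurable] = Psi_meas_g[OF xi0_meas coin_meas]
lemmas Dset_meas[measurable] = Dset_meas_g[OF xi0_meas coin_meas]
lemmas ismax_meas[measurable] = ismax_meas_g[OF xi0_meas coin_meas]
lemmas good_meas[measurable] = good_meas_g[OF xi0_meas coin_meas]
lemmas AYp_meas[measurable] = AYp_meas_g[OF xi0_meas coin_meas]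
lemmas NTp_meas[measurable] = NTp_meas_g[OF xi0_meas coin_meas]

lemma tail_gt: "1 \<le> x \<Longrightarrow> prob {\<omega> \<in> space M. x < xi0 z \<omega>} = x powr (-\<alpha>)"
  using tail by auto

lemma prob_le1: "prob {\<omega>\<in>space M. xi0 z \<omega> \<le> 1} = 0"
proof -
  have "{\<omega>\<in>space M. xi0 z \<omega> \<le> 1} = space M - {\<omega> \<in> space M. 1 < xi0 z \<omega>}" by auto
  also have "prob \<dots> = 1 - prob {\<omega> \<in> space M. 1 < xi0 z \<omega>}" by (rule prob_compl) measurable
  also have "\<dots> = 0" using tail_gt[of 1 z] by simp
  finally show ?thesis .
qed

lemma AE_gt1: "AE \<omega> in M. 1 < xi0 z \<omega>"
proof -
  have "AE \<omega> in M. \<not> (xi0 z \<omega> \<le> 1)"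
    using prob_Collect_eq_0[of "\<lambda>\<omega>. xi0 z \<omega> \<le> 1"] prob_le1[of z] by simp
  then show ?thesis by eventually_elim simp
qed

lemma AE_all_gt1: "AE \<omega> in M. \<forall>z. 1 < xi0 z \<omega>"
  using AE_gt1 by (subst AE_all_countable) auto

lemma prob_point: "prob {\<omega>\<in>space M. xi0 z \<omega> = a} = 0"
proof (cases "a \<le> 1")
  case True
  have "prob {\<omega>\<in>space M. xi0 z \<omega> = a} \<le> prob {\<omega>\<in>space M. xi0 z \<omega> \<le> 1}"
    using True by (intro finite_measure_mono) auto
  then show ?thesis using prob_le1[of z] measure_nonneg[of M] by (metis order_antisym)
next
  case False
  define b where "b n = a - (a - 1) * inverse (real (Suc n))" for n
  have b1: "1 \<le> b n" "b n \<le> a" for n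
  proof -
    have "inverse (real (Suc n)) \<le> 1" "0 \<le> inverse (real (Suc n))" by (auto simp: field_simps)
    moreover have "(a - 1) * inverse (real (Suc n)) \<le> (a - 1)"
      using False \<open>inverse (real (Suc n)) \<le> 1\<close> by (intro mult_left_le) auto
    moreover have "0 \<le> (a - 1) * inverse (real (Suc n))"
      using False by (intro mult_nonneg_nonneg) auto
    ultimately show "1 \<le> b n" "b n \<le> a" unfolding b_def by linarith+
  qed
  have le: "prob {\<omega>\<in>space M. xi0 z \<omega> = a} \<le> b n powr (-\<alpha>) - a powr (-\<alpha>)" for n
  proof -
    have bl: "b n < a"
    proof -
      have "0 < (a - 1) * inverse (real (Suc n))" using False by (auto intro!: mult_pos_pos)
      then show ?thesis by (simp add: b_def)
    qed
    have "prob {\<omega>\<in>space M. xi0 z \<omega> = a} \<le> prob ({\<omega>\<in>space M. b n < xi0 z \<omega>} - {\<omega>\<in>space M. a < xi0 z \<omega>})"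
      using bl by (intro finite_measure_mono) auto
    also have "\<dots> = prob {\<omega>\<in>space M. b n < xi0 z \<omega>} - prob {\<omega>\<in>space M. a < xi0 z \<omega>}"
      using bl by (intro finite_measure_Diff) auto
    also have "\<dots> = b n powr (-\<alpha>) - a powr (-\<alpha>)" using b1[of n] False by (simp add: tail_gt)
    finally show ?thesis .
  qed
  have "b \<longlonglongrightarrow> a - (a - 1) * 0" unfolding b_def
    by (intro tendsto_intros LIMSEQ_inverse_real_of_nat)
  then have "(\<lambda>n. b n powr (-\<alpha>) - a powr (-\<alpha>)) \<longlonglongrightarrow> a powr (-\<alpha>) - a powr (-\<alpha>)"
    using False by (intro tendsto_intros) auto
  then have "prob {\<omega>\<in>space M. xi0 z \<omega> = a} \<le> 0"
    using le by (intro LIMSEQ_le_const) auto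
  then show ?thesis using measure_nonneg[of M] by (metis order_antisym)
qed

lemma prob_interval: "1 \<le> a \<Longrightarrow> a \<le> b \<Longrightarrow>
   prob {\<omega>\<in>space M. a < xi0 z \<omega> \<and> xi0 z \<omega> \<le> b} = a powr (-\<alpha>) - b powr (-\<alpha>)"
proof -
  assume ab: "1 \<le> a" "a \<le> b"
  have "{\<omega>\<in>space M. a < xi0 z \<omega> \<and> xi0 z \<omega> \<le> b} = {\<omega>\<in>space M. a < xi0 z \<omega>} - {\<omega>\<in>space M. b < xi0 z \<omega>}"
    by auto
  also have "prob \<dots> = prob {\<omega>\<in>space M. a < xi0 z \<omega>} - prob {\<omega>\<in>space M. b < xi0 z \<omega>}"
    using ab by (intro finite_measure_Diff) auto
  finally show ?thesis using ab by (simp add: tail_gt)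
qed

lemma prob_coin: "1 \<le> n \<Longrightarrow> prob {\<omega>\<in>space M. coin n \<omega>} = p n"
  using pc by auto

lemma prob_notcoin: "1 \<le> n \<Longrightarrow> prob {\<omega>\<in>space M. \<not> coin n \<omega>} = 1 - p n"
proof -
  assume n: "1 \<le> n"
  have "{\<omega>\<in>space M. \<not> coin n \<omega>} = space M - {\<omega>\<in>space M. coin n \<omega>}" by auto
  also have "prob \<dots> = 1 - prob {\<omega>\<in>space M. coin n \<omega>}" by (rule prob_compl) measurable
  finally show ?thesis using prob_coin[OF n] by simp
qed

lemma indep_pair: "i \<noteq> j \<Longrightarrow> indep_var borel (X i) borel (X j)"
proof -
  assume ij: "i \<noteq> j"
  have "indep_var (PiM {i} (\<lambda>_. borel)) (\<lambda>\<omega>. restrict (\<lambda>k. X k \<omega>) {i})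
                  (PiM {j} (\<lambda>_. borel)) (\<lambda>\<omega>. restrict (\<lambda>k. X k \<omega>) {j})"
    using ij by (intro indep_var_restrict[OF indX]) auto
  then have "indep_var borel ((\<lambda>f. f i) \<circ> (\<lambda>\<omega>. restrict (\<lambda>k. X k \<omega>) {i}))
                  borel ((\<lambda>f. f j) \<circ> (\<lambda>\<omega>. restrict (\<lambda>k. X k \<omega>) {j}))"
    by (rule indep_var_compose) (auto intro: measurable_component_singleton)
  moreover have "(\<lambda>f. f i) \<circ> (\<lambda>\<omega>. restrict (\<lambda>k. X k \<omega>) {i}) = X i"
     "(\<lambda>f. f j) \<circ> (\<lambda>\<omega>. restrict (\<lambda>k. X k \<omega>) {j}) = X j" by (auto simp: fun_eq_iff)
  ultimately show ?thesis by simp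
qed

end

lemma g_inc:
  fixes u v c :: real
  assumes "0 < u" "u < v" "0 \<le> c" "c \<le> u"
  shows "u - c * ln u < v - c * ln v"
proof (cases "c = 0")
  case True then show ?thesis using assms by simp
next
  case False
  then have c: "0 < c" using assms by simp
  have "ln v - ln u < (v - u) / u" using ln_diff_less[of v u] assms by simp
  then have "c * (ln v - ln u) < c * ((v - u) / u)" using c by (intro mult_strict_left_mono)
  also have "c * ((v - u) / u) \<le> v - u"
  proof -
    have "c * ((v - u) / u) = (v - u) * (c / u)" by simp
    also have "\<dots> \<le> (v - u) * 1" using assms by (intro mult_left_mono) auto
    finally show ?thesis by simp
  qed
  finally show ?thesis by (simp add: algebra_simps)
qed

lemma g_dec:
  fixes u v c :: real
  assumes "0 < u" "u < v" "v \<le> c"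
  shows "v - c * ln v < u - c * ln u"
proof -
  have c: "0 < c" using assms by simp
  have "ln u - ln v < (u - v) / v" using ln_diff_less[of u v] assms by simp
  then have "(v - u) / v < ln v - ln u"
  proof -
    assume h: "ln u - ln v < (u - v) / v"
    have "(u - v) / v = - ((v - u) / v)" by (simp add: minus_divide_left)
    then show ?thesis using h by linarith
  qed
  then have "c * ((v - u) / v) < c * (ln v - ln u)" using c by (intro mult_strict_left_mono)
  moreover have "v - u \<le> c * ((v - u) / v)"
  proof -
    have "c * ((v - u) / v) = (v - u) * (c / v)" by simp
    moreover have "(v - u) * 1 \<le> (v - u) * (c / v)" using assms by (intro mult_left_mono) auto
    ultimately show ?thesis by (simp only: mult_1_right)
  qed
  ultimately show ?thesis by (simp add: algebra_simps)
qed

lemma g_le1: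
  fixes x c :: real
  assumes "1 \<le> x" "x \<le> c"
  shows "x - c * ln x \<le> 1"
proof (cases "x = 1")
  case True then show ?thesis by simp
next
  case False
  then show ?thesis using g_dec[of 1 x c] assms by simp
qed

lemma subsing: "(\<And>u v. u \<in> A \<Longrightarrow> v \<in> A \<Longrightarrow> u = v) \<Longrightarrow> \<exists>x. \<forall>v\<in>A. v = x"
  by blast

lemma level2:
  fixes c r :: real
  assumes "0 \<le> c"
  shows "\<exists>x1 x2. \<forall>v. 1 < v \<and> v - c * ln v = r \<longrightarrow> v = x1 \<or> v = x2"
proof -
  let ?A = "{v. 1 < v \<and> v - c * ln v = r \<and> c \<le> v}"
  let ?B = "{v. 1 < v \<and> v - c * ln v = r \<and> v \<le> c}"
  have "\<exists>x. \<forall>v\<in>?A. v = x"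
  proof (rule subsing)
    fix u v assume "u \<in> ?A" "v \<in> ?A"
    then show "u = v" using g_inc[of u v c] g_inc[of v u c] assms
      by (cases u v rule: linorder_cases) auto
  qed
  then obtain x1 where x1: "\<forall>v\<in>?A. v = x1" by blast
  have "\<exists>x. \<forall>v\<in>?B. v = x"
  proof (rule subsing)
    fix u v assume "u \<in> ?B" "v \<in> ?B"
    then show "u = v" using g_dec[of u v c] g_dec[of v u c]
      by (cases u v rule: linorder_cases) auto
  qed
  then obtain x2 where x2: "\<forall>v\<in>?B. v = x2" by blast
  show ?thesis
  proof (intro exI allI impI)
    fix v assume v: "1 < v \<and> v - c * ln v = r"
    show "v = x1 \<or> v = x2"
    proof (cases "c \<le> v")
      case True then show ?thesis using x1 v by auto
    next
      case False then show ?thesis using x2 v by auto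
    qed
  qed
qed

context L begin

lemma prob_level: "0 \<le> c \<Longrightarrow> prob {\<omega>\<in>space M. xi0 z \<omega> - c * ln (xi0 z \<omega>) = r} = 0"
proof -
  assume c: "0 \<le> c"
  obtain x1 x2 where x: "\<forall>v. 1 < v \<and> v - c * ln v = r \<longrightarrow> v = x1 \<or> v = x2"
    using level2[OF c, of r] by blast
  have sub: "{\<omega>\<in>space M. xi0 z \<omega> - c * ln (xi0 z \<omega>) = r} \<subseteq>
      ({\<omega>\<in>space M. xi0 z \<omega> \<le> 1} \<union> {\<omega>\<in>space M. xi0 z \<omega> = x1}) \<union> {\<omega>\<in>space M. xi0 z \<omega> = x2}"
    using x by force
  have "prob {\<omega>\<in>space M. xi0 z \<omega> - c * ln (xi0 z \<omega>) = r} \<le>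
      prob (({\<omega>\<in>space M. xi0 z \<omega> \<le> 1} \<union> {\<omega>\<in>space M. xi0 z \<omega> = x1}) \<union> {\<omega>\<in>space M. xi0 z \<omega> = x2})"
    using sub by (intro finite_measure_mono) auto
  also have "\<dots> \<le> prob ({\<omega>\<in>space M. xi0 z \<omega> \<le> 1} \<union> {\<omega>\<in>space M. xi0 z \<omega> = x1}) + prob {\<omega>\<in>space M. xi0 z \<omega> = x2}"
    by (intro measure_Un_le) auto
  also have "\<dots> \<le> (prob {\<omega>\<in>space M. xi0 z \<omega> \<le> 1} + prob {\<omega>\<in>space M. xi0 z \<omega> = x1}) + prob {\<omega>\<in>space M. xi0 z \<omega> = x2}"
    by (intro add_right_mono measure_Un_le) auto
  also have "\<dots> = 0" by (simp add: prob_le1 prob_point)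
  finally show ?thesis using measure_nonneg[of M] by (metis order_antisym)
qed

lemma prob_tie:
  assumes z: "z1 \<noteq> z2" and c1: "0 \<le> c1" and c2: "0 \<le> c2"
  shows "prob {\<omega>\<in>space M. xi0 z1 \<omega> - c1 * ln (xi0 z1 \<omega>) = xi0 z2 \<omega> - c2 * ln (xi0 z2 \<omega>)} = 0"
proof -
  define X1 where "X1 = xi0 z1"
  define X2 where "X2 = xi0 z2"
  have [measurable]: "X1 \<in> borel_measurable M" "X2 \<in> borel_measurable M" by (simp_all add: X1_def X2_def)
  have "indep_var borel (X (Inl z1)) borel (X (Inl z2))" using z by (intro indep_pair) simp
  then have iv: "indep_var borel X1 borel X2" by (simp add: X_def X1_def X2_def)
  let ?D1 = "distr M borel X1" and ?D2 = "distr M borel X2"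
  interpret D2: prob_space ?D2 by (rule prob_space_distr) simp
  have eqd: "?D1 \<Otimes>\<^sub>M ?D2 = distr M (borel \<Otimes>\<^sub>M borel) (\<lambda>x. (X1 x, X2 x))"
    using iv unfolding indep_var_distribution_eq by simp
  define S where "S = {uv \<in> space (borel \<Otimes>\<^sub>M borel). fst uv - c1 * ln (fst uv) = snd uv - c2 * ln (snd uv)}"
  have S[measurable]: "S \<in> sets (borel \<Otimes>\<^sub>M borel)" unfolding S_def by measurable
  have inner: "emeasure ?D2 (Pair u -` S) = 0" for u
  proof -
    have "Pair u -` S = {v. v - c2 * ln v = u - c1 * ln u}" by (auto simp: S_def space_pair_measure)
    then have "emeasure ?D2 (Pair u -` S) = emeasure M (X2 -` {v. v - c2 * ln v = u - c1 * ln u} \<inter> space M)"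
      by (simp add: emeasure_distr)
    also have "X2 -` {v. v - c2 * ln v = u - c1 * ln u} \<inter> space M =
        {\<omega>\<in>space M. xi0 z2 \<omega> - c2 * ln (xi0 z2 \<omega>) = u - c1 * ln u}" by (auto simp: X2_def)
    also have "emeasure M \<dots> = ennreal (prob \<dots>)" by (simp add: emeasure_eq_measure)
    also have "\<dots> = 0" using prob_level[OF c2] by simp
    finally show ?thesis .
  qed
  have "emeasure (?D1 \<Otimes>\<^sub>M ?D2) S = (\<integral>\<^sup>+ u. emeasure ?D2 (Pair u -` S) \<partial>?D1)"
    by (rule D2.emeasure_pair_measure_alt) simp
  also have "\<dots> = 0" by (simp add: inner)
  finally have "emeasure (distr M (borel \<Otimes>\<^sub>M borel) (\<lambda>x. (X1 x, X2 x))) S = 0" by (simp add: eqd)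
  then have "emeasure M ((\<lambda>x. (X1 x, X2 x)) -` S \<inter> space M) = 0"
    by (subst (asm) emeasure_distr) auto
  moreover have "(\<lambda>x. (X1 x, X2 x)) -` S \<inter> space M =
      {\<omega>\<in>space M. xi0 z1 \<omega> - c1 * ln (xi0 z1 \<omega>) = xi0 z2 \<omega> - c2 * ln (xi0 z2 \<omega>)}"
    by (auto simp: S_def X1_def X2_def space_pair_measure)
  ultimately show ?thesis by (simp add: emeasure_eq_measure)
qed

lemma AE_NT: "0 < t \<Longrightarrow> AE \<omega> in M. NTp xi0 t \<omega>"
proof -
  assume t: "0 < t"
  have "AE \<omega> in M. xi0 (int z1) \<omega> - real z1 / t * ln (xi0 (int z1) \<omega>) \<noteq>
                    xi0 (int z2) \<omega> - real z2 / t * ln (xi0 (int z2) \<omega>)" if "z1 \<noteq> z2" for z1 z2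
  proof -
    have "prob {\<omega>\<in>space M. xi0 (int z1) \<omega> - real z1 / t * ln (xi0 (int z1) \<omega>) =
                    xi0 (int z2) \<omega> - real z2 / t * ln (xi0 (int z2) \<omega>)} = 0"
      using that t by (intro prob_tie) auto
    then show ?thesis by (subst (asm) prob_Collect_eq_0) measurable
  qed
  then have "AE \<omega> in M. \<forall>z1 z2::nat. z1 \<noteq> z2 \<longrightarrow> xi0 (int z1) \<omega> - real z1 / t * ln (xi0 (int z1) \<omega>) \<noteq>
                    xi0 (int z2) \<omega> - real z2 / t * ln (xi0 (int z2) \<omega>)"
    by (subst AE_all_countable, intro allI, subst AE_all_countable) auto
  then show ?thesis unfolding NTp_def .
qed

end

context L begin

lemma AE_fin:
  assumes t: "0 < t"
  shows "AE \<omega> in M. finite {z. 1 < Psi xi0 coin t z \<omega>}"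
proof -
  define A where "A n = {\<omega>\<in>space M. max 1 (real n / t) < xi0 (int n) \<omega>}" for n
  have Am[measurable]: "A n \<in> sets M" for n unfolding A_def by measurable
  have pA: "measure M (A n) = (max 1 (real n / t)) powr (-\<alpha>)" for n
    unfolding A_def by (rule tail_gt) simp
  have "summable (\<lambda>n. real n powr (-\<alpha>) / t powr (-\<alpha>))"
    using a2 by (intro summable_divide) (simp add: summable_real_powr_iff)
  then have sA: "summable (\<lambda>n. measure M (A n))"
  proof (rule summable_comparison_test'[where N=1])
    fix n :: nat assume n: "1 \<le> n"
    have "norm (measure M (A n)) = (max 1 (real n / t)) powr (-\<alpha>)" by (simp add: pA)
    also have "\<dots> \<le> (real n / t) powr (-\<alpha>)"
      using n t a2 by (intro powr_mono2') auto
    also have "\<dots> = real n powr (-\<alpha>) / t powr (-\<alpha>)" by (rule powr_divide)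
    finally show "norm (measure M (A n)) \<le> real n powr (-\<alpha>) / t powr (-\<alpha>)" .
  qed
  have "AE \<omega> in M. eventually (\<lambda>n. \<omega> \<in> space M - A n) sequentially"
    by (rule borel_cantelli_AE1) (auto simp: less_top[symmetric] sA)
  then show ?thesis using AE_all_gt1 AE_space
  proof eventually_elim
    case (elim \<omega>)
    then obtain N0 where N0: "\<forall>n\<ge>N0. \<omega> \<in> space M - A n" by (auto simp: eventually_sequentially)
    define B where "B = max N0 (nat \<lceil>t\<rceil> + 1)"
    have "{z. 1 < Psi xi0 coin t z \<omega>} \<subseteq> {..<B}"
    proof (rule subsetI, rule ccontr)
      fix z assume z1: "z \<in> {z. 1 < Psi xi0 coin t z \<omega>}" and "z \<notin> {..<B}"
      then have zB: "B \<le> z" by simp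
      then have "N0 \<le> z" by (simp add: B_def)
      then have "\<omega> \<notin> A z" using N0 by blast
      then have le: "xi0 (int z) \<omega> \<le> max 1 (real z / t)" using elim by (auto simp: A_def)
      have "nat \<lceil>t\<rceil> + 1 \<le> z" using zB by (simp add: B_def)
      then have "t \<le> real z" by linarith
      then have zt: "1 \<le> real z / t" using t by simp
      then have "xi0 (int z) \<omega> \<le> real z / t" using le by simp
      moreover have "1 \<le> xi0 (int z) \<omega>" using elim(2) by (simp add: less_imp_le)
      ultimately have "xi0 (int z) \<omega> - real z / t * ln (xi0 (int z) \<omega>) \<le> 1"
        by (intro g_le1)
      then show False using z1 by (simp add: Psi_nat)
    qed
    then show ?case by (rule finite_subset) simp
  qed
qed

end

definition XI :: "int \<Rightarrow> (int + nat \<Rightarrow> real) \<Rightarrow> real" where "XI z f = f (Inl z)"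
definition CO :: "nat \<Rightarrow> nat \<Rightarrow> (int + nat \<Rightarrow> real) \<Rightarrow> bool" where "CO y n f = (n \<noteq> y \<and> f (Inr n) = 1)"

lemma AYp_comp: "AYp \<alpha> xi0 coin t y (h \<omega>) = AYp \<alpha> (\<lambda>z w. xi0 z (h w)) (\<lambda>n w. coin n (h w)) t y \<omega>"
  by (simp add: AYp_def Dset_def Psi_def xi_def)

lemma NTp_comp: "NTp xi0 t (h \<omega>) = NTp (\<lambda>z w. xi0 z (h w)) t \<omega>"
  by (simp add: NTp_def)

context L begin

lemma coin_indep:
  assumes y: "1 \<le> y"
  shows "prob {\<omega>\<in>space M. \<not> coin y \<omega> \<and> (AYp \<alpha> xi0 coin t y \<omega> \<and> NTp xi0 t \<omega>)} =
         (1 - p y) * prob {\<omega>\<in>space M. AYp \<alpha> xi0 coin t y \<omega> \<and> NTp xi0 t \<omega>}"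
proof -
  define B where "B = UNIV - {Inr y :: int + nat}"
  define Y1 where "Y1 \<omega> = restrict (\<lambda>i. X i \<omega>) {Inr y}" for \<omega>
  define Y2 where "Y2 \<omega> = restrict (\<lambda>i. X i \<omega>) B" for \<omega>
  let ?N1 = "PiM {Inr y :: int + nat} (\<lambda>_. borel :: real measure)"
  let ?N = "PiM B (\<lambda>_. borel :: real measure)"
  have iv: "indep_var ?N1 Y1 ?N Y2"
    unfolding Y1_def Y2_def by (rule indep_var_restrict[OF indX]) (auto simp: B_def)
  have XIm: "XI z \<in> borel_measurable ?N" for z
  proof -
    have "(\<lambda>f. f (Inl z)) \<in> measurable ?N borel"
      by (rule measurable_component_singleton) (simp add: B_def)
    then show ?thesis by (simp add: XI_def[abs_def])
  qed
  have COm: "CO y n \<in> measurable ?N (count_space UNIV)" for n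
  proof (cases "n = y")
    case True
    then have "CO y n = (\<lambda>_. False)" by (simp add: CO_def fun_eq_iff)
    then show ?thesis by simp
  next
    case False
    have [measurable]: "(\<lambda>f. f (Inr n)) \<in> measurable ?N borel"
      by (rule measurable_component_singleton) (simp add: B_def False)
    have "CO y n = (\<lambda>f. f (Inr n) = 1)" using False by (simp add: CO_def fun_eq_iff)
    moreover have "(\<lambda>f. f (Inr n) = (1::real)) \<in> measurable ?N (count_space UNIV)" by measurable
    ultimately show ?thesis by simp
  qed
  define S1 where "S1 = {f \<in> space ?N1. f (Inr y) = 0}"
  define S2 where "S2 = {f \<in> space ?N. AYp \<alpha> XI (CO y) t y f \<and> NTp XI t f}"
  have S1m: "S1 \<in> sets ?N1"
  proof -
    have [measurable]: "(\<lambda>f. f (Inr y)) \<in> measurable ?N1 borel"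
      by (rule measurable_component_singleton) simp
    show ?thesis unfolding S1_def by measurable
  qed
  have S2m: "S2 \<in> sets ?N"
  proof -
    have "S2 = {f \<in> space ?N. AYp \<alpha> XI (CO y) t y f} \<inter> {f \<in> space ?N. NTp XI t f}"
      by (auto simp: S2_def)
    also have "\<dots> \<in> sets ?N"
      by (intro sets.Int AYp_meas_g[OF XIm COm] NTp_meas_g[OF XIm COm])
    finally show ?thesis .
  qed
  note eq0 = indep_varD[OF iv]
  note eq1 = eq0[OF S1m]
  note eq = eq1[OF S2m]
  have xiY: "(\<lambda>z w. XI z (Y2 w)) = xi0" by (simp add: XI_def Y2_def B_def X_def fun_eq_iff)
  have coY: "(\<lambda>n w. CO y n (Y2 w)) = coinm y coin"
    by (simp add: CO_def Y2_def B_def X_def fun_eq_iff coinm_def)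
  have inS2: "Y2 \<omega> \<in> S2 \<longleftrightarrow> AYp \<alpha> xi0 coin t y \<omega> \<and> NTp xi0 t \<omega>" if "\<omega> \<in> space M" for \<omega>
  proof -
    have sp: "Y2 \<omega> \<in> space ?N" by (simp add: Y2_def space_PiM)
    have "Y2 \<omega> \<in> S2 \<longleftrightarrow> AYp \<alpha> XI (CO y) t y (Y2 \<omega>) \<and> NTp XI t (Y2 \<omega>)" using sp by (simp add: S2_def)
    also have "\<dots> \<longleftrightarrow> AYp \<alpha> (\<lambda>z w. XI z (Y2 w)) (\<lambda>n w. CO y n (Y2 w)) t y \<omega> \<and> NTp (\<lambda>z w. XI z (Y2 w)) t \<omega>"
      by (simp only: AYp_comp[where h=Y2] NTp_comp[where h=Y2])
    also have "\<dots> \<longleftrightarrow> AYp \<alpha> xi0 coin t y \<omega> \<and> NTp xi0 t \<omega>"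
      by (simp only: xiY coY AYp_coinm)
    finally show ?thesis .
  qed
  have inS1: "Y1 \<omega> \<in> S1 \<longleftrightarrow> \<not> coin y \<omega>" for \<omega>
    by (simp add: S1_def Y1_def space_PiM X_def)
  have "(\<lambda>x. (Y1 x, Y2 x)) -` (S1 \<times> S2) \<inter> space M =
      {\<omega>\<in>space M. \<not> coin y \<omega> \<and> (AYp \<alpha> xi0 coin t y \<omega> \<and> NTp xi0 t \<omega>)}"
    using inS1 inS2 by auto
  moreover have "Y1 -` S1 \<inter> space M = {\<omega>\<in>space M. \<not> coin y \<omega>}" using inS1 by auto
  moreover have "Y2 -` S2 \<inter> space M = {\<omega>\<in>space M. AYp \<alpha> xi0 coin t y \<omega> \<and> NTp xi0 t \<omega>}"
    using inS2 by auto
  ultimately show ?thesis using eq prob_notcoin[OF y] by simp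
qed

end

context L begin

definition "Ev t y = {\<omega>\<in>space M. AYp \<alpha> xi0 coin t y \<omega> \<and> NTp xi0 t \<omega>}"

lemma Ev_m[measurable]: "Ev t y \<in> sets M"
proof -
  have "Ev t y = {\<omega>\<in>space M. AYp \<alpha> xi0 coin t y \<omega>} \<inter> {\<omega>\<in>space M. NTp xi0 t \<omega>}"
    by (auto simp: Ev_def)
  also have "\<dots> \<in> sets M" by (intro sets.Int AYp_meas NTp_meas)
  finally show ?thesis .
qed

lemma ptw_bound: "(\<Sum>y. indicator (Ev t y) \<omega>) \<le> (of_nat (2 * nat \<lceil>\<alpha>\<rceil> + 1) :: ennreal)"
proof (cases "NTp xi0 t \<omega>")
  case False
  then have "\<And>y. (indicator (Ev t y) \<omega> :: ennreal) = 0" by (simp add: Ev_def)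
  then show ?thesis by simp
next
  case True
  define A where "A = nat \<lceil>\<alpha>\<rceil>"
  have "\<exists>c. {y. AYp \<alpha> xi0 coin t y \<omega>} \<subseteq> {c - A .. c + A}"
    unfolding A_def by (rule count_det[OF True])
  then obtain c where c: "{y. AYp \<alpha> xi0 coin t y \<omega>} \<subseteq> {c - A .. c + A}" ..
  have z: "(indicator (Ev t y) \<omega> :: ennreal) = 0" if "y \<notin> {c - A .. c + A}" for y
  proof -
    have "\<not> AYp \<alpha> xi0 coin t y \<omega>" using that c by blast
    then show ?thesis by (simp add: Ev_def)
  qed
  have "(\<Sum>y. indicator (Ev t y) \<omega> :: ennreal) = (\<Sum>y\<in>{c - A .. c + A}. indicator (Ev t y) \<omega>)"
    by (rule suminf_finite) (simp_all add: z)
  also have "\<dots> \<le> (\<Sum>y\<in>{c - A .. c + A}. (1::ennreal))"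
    by (intro sum_mono) (simp add: indicator_def)
  also have "\<dots> = of_nat (card {c - A .. c + A})" by simp
  also have "card {c - A .. c + A} \<le> 2 * A + 1" unfolding card_atLeastAtMost by arith
  then have "(of_nat (card {c - A .. c + A}) :: ennreal) \<le> of_nat (2 * A + 1)" by (simp only: of_nat_le_iff)
  finally show ?thesis unfolding A_def .
qed


lemma Bd_m: "{\<omega>\<in>space M. \<not> coin y \<omega> \<and> (AYp \<alpha> xi0 coin t y \<omega> \<and> NTp xi0 t \<omega>)} \<in> sets M"
proof -
  have "{\<omega>\<in>space M. \<not> coin y \<omega> \<and> (AYp \<alpha> xi0 coin t y \<omega> \<and> NTp xi0 t \<omega>)} = {\<omega>\<in>space M. \<not> coin y \<omega>} \<inter> Ev t y"
    by (auto simp: Ev_def)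
  also have "\<dots> \<in> sets M" by (intro sets.Int Ev_m) measurable
  finally show ?thesis .
qed

lemma sum_bound:
  assumes d: "0 \<le> \<delta>" and Nd: "1 \<le> Nd" and q: "\<forall>y\<ge>Nd. 1 - p y \<le> \<delta>"
  shows "emeasure M (\<Union>y\<in>{Nd..}. {\<omega>\<in>space M. \<not> coin y \<omega> \<and> (AYp \<alpha> xi0 coin t y \<omega> \<and> NTp xi0 t \<omega>)})
         \<le> ennreal \<delta> * of_nat (2 * nat \<lceil>\<alpha>\<rceil> + 1)"
proof -
  define Bd where "Bd y = (if Nd \<le> y then {\<omega>\<in>space M. \<not> coin y \<omega> \<and> (AYp \<alpha> xi0 coin t y \<omega> \<and> NTp xi0 t \<omega>)} else {})" for y
  have Bdm: "Bd y \<in> sets M" for y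
  proof (cases "Nd \<le> y")
    case True then show ?thesis unfolding Bd_def using Bd_m by (simp only: if_True)
  next
    case False then show ?thesis unfolding Bd_def by (simp only: if_False sets.empty_sets)
  qed
  have U: "(\<Union>y\<in>{Nd..}. {\<omega>\<in>space M. \<not> coin y \<omega> \<and> (AYp \<alpha> xi0 coin t y \<omega> \<and> NTp xi0 t \<omega>)}) = (\<Union>y. Bd y)"
    by (auto simp: Bd_def split: if_splits)
  have "emeasure M (\<Union>y. Bd y) \<le> (\<Sum>y. emeasure M (Bd y))"
    using Bdm by (intro emeasure_subadditive_countably) auto
  also have "\<dots> \<le> (\<Sum>y. ennreal \<delta> * emeasure M (Ev t y))"
  proof (rule suminf_le)
    fix y
    show "emeasure M (Bd y) \<le> ennreal \<delta> * emeasure M (Ev t y)"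
    proof (cases "Nd \<le> y")
      case False then show ?thesis by (simp add: Bd_def)
    next
      case True
      then have y1: "1 \<le> y" using Nd by simp
      have "emeasure M (Bd y) = ennreal (prob (Bd y))" by (simp add: emeasure_eq_measure)
      also have "prob (Bd y) = (1 - p y) * prob (Ev t y)"
        using coin_indep[OF y1, of t] True by (simp add: Bd_def Ev_def)
      also have "\<dots> \<le> \<delta> * prob (Ev t y)" using q True by (intro mult_right_mono) auto
      finally have "emeasure M (Bd y) \<le> ennreal (\<delta> * prob (Ev t y))" by (simp add: ennreal_leI)
      also have "\<dots> = ennreal \<delta> * emeasure M (Ev t y)"
        using d by (simp add: ennreal_mult emeasure_eq_measure)
      finally show ?thesis .
    qed
  qed (rule summableI)+
  also have "\<dots> = ennreal \<delta> * (\<Sum>y. emeasure M (Ev t y))" by simp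
  also have "(\<Sum>y. emeasure M (Ev t y)) = (\<Sum>y. \<integral>\<^sup>+\<omega>. indicator (Ev t y) \<omega> \<partial>M)"
    by (simp add: nn_integral_indicator)
  also have "\<dots> = (\<integral>\<^sup>+\<omega>. (\<Sum>y. indicator (Ev t y) \<omega>) \<partial>M)"
    by (rule nn_integral_suminf[symmetric]) simp
  also have "\<dots> \<le> (\<integral>\<^sup>+\<omega>. of_nat (2 * nat \<lceil>\<alpha>\<rceil> + 1) \<partial>M)"
    by (intro nn_integral_mono ptw_bound)
  also have "\<dots> = of_nat (2 * nat \<lceil>\<alpha>\<rceil> + 1)" by (simp add: emeasure_space_1)
  finally show ?thesis unfolding U by (simp add: mult_left_mono)
qed

end

context L begin

lemma pair_prob:
  assumes ab: "1 \<le> a" "a \<le> b" and w: "1 \<le> w"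
  shows "prob {\<omega>\<in>space M. coin w \<omega> \<and> a < xi0 (int w) \<omega> \<and> xi0 (int w) \<omega> \<le> b} =
         p w * (a powr (-\<alpha>) - b powr (-\<alpha>))"
proof -
  define J where "J = {Inl (int w), Inr w :: int + nat}"
  define A where "A i = (case i of Inl _ \<Rightarrow> {a<..b} | Inr _ \<Rightarrow> {1::real})" for i :: "int + nat"
  have "prob (\<Inter>i\<in>J. X i -` A i \<inter> space M) = (\<Prod>i\<in>J. prob (X i -` A i \<inter> space M))"
    by (rule indep_varsD[OF indX]) (auto simp: J_def A_def split: sum.splits)
  moreover have "(\<Inter>i\<in>J. X i -` A i \<inter> space M) = {\<omega>\<in>space M. coin w \<omega> \<and> a < xi0 (int w) \<omega> \<and> xi0 (int w) \<omega> \<le> b}"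
    by (auto simp: J_def A_def X_def)
  moreover have "(\<Prod>i\<in>J. prob (X i -` A i \<inter> space M)) =
      prob {\<omega>\<in>space M. a < xi0 (int w) \<omega> \<and> xi0 (int w) \<omega> \<le> b} * prob {\<omega>\<in>space M. coin w \<omega>}"
  proof -
    have "(\<Prod>i\<in>J. prob (X i -` A i \<inter> space M)) = prob (X (Inl (int w)) -` A (Inl (int w)) \<inter> space M) * prob (X (Inr w) -` A (Inr w) \<inter> space M)"
      by (simp add: J_def)
    moreover have "X (Inl (int w)) -` A (Inl (int w)) \<inter> space M = {\<omega>\<in>space M. a < xi0 (int w) \<omega> \<and> xi0 (int w) \<omega> \<le> b}"
      by (auto simp: A_def X_def)
    moreover have "X (Inr w) -` A (Inr w) \<inter> space M = {\<omega>\<in>space M. coin w \<omega>}"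
      by (auto simp: A_def X_def)
    ultimately show ?thesis by simp
  qed
  ultimately show ?thesis using prob_interval[OF ab] prob_coin[OF w] by simp
qed

lemma nohit_prob:
  assumes ab: "1 \<le> a" "a \<le> b" and W: "W \<noteq> {}" "finite W" "\<forall>w\<in>W. 1 \<le> w"
  shows "prob {\<omega>\<in>space M. \<forall>w\<in>W. \<not> (coin w \<omega> \<and> a < xi0 (int w) \<omega> \<and> xi0 (int w) \<omega> \<le> b)} =
         (\<Prod>w\<in>W. 1 - p w * (a powr (-\<alpha>) - b powr (-\<alpha>)))"
proof -
  define K' where "K' w = {Inl (int w), Inr w :: int + nat}" for w
  define Y where "Y w \<omega> = restrict (\<lambda>i. X i \<omega>) (K' w)" for w \<omega>
  have iv: "indep_vars (\<lambda>w. PiM (K' w) (\<lambda>_. borel :: real measure)) Y W"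
    unfolding Y_def
    by (rule indep_vars_restrict[OF indX]) (auto simp: disjoint_family_on_def K'_def)
  define A where "A w = {f \<in> space (PiM (K' w) (\<lambda>_. borel :: real measure)).
      \<not> (f (Inr w) = 1 \<and> a < f (Inl (int w)) \<and> f (Inl (int w)) \<le> b)}" for w
  have Am: "A w \<in> sets (PiM (K' w) (\<lambda>_. borel))" for w
  proof -
    have [measurable]: "(\<lambda>f. f (Inr w)) \<in> measurable (PiM (K' w) (\<lambda>_. borel :: real measure)) borel"
      by (rule measurable_component_singleton) (simp add: K'_def)
    have [measurable]: "(\<lambda>f. f (Inl (int w))) \<in> measurable (PiM (K' w) (\<lambda>_. borel :: real measure)) borel"
      by (rule measurable_component_singleton) (simp add: K'_def)
    show ?thesis unfolding A_def by measurable
  qed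
  have pre: "Y w -` A w \<inter> space M = {\<omega>\<in>space M. \<not> (coin w \<omega> \<and> a < xi0 (int w) \<omega> \<and> xi0 (int w) \<omega> \<le> b)}" for w
    by (auto simp: Y_def A_def K'_def X_def space_PiM)
  have "prob (\<Inter>w\<in>W. Y w -` A w \<inter> space M) = (\<Prod>w\<in>W. prob (Y w -` A w \<inter> space M))"
    by (rule indep_varsD[OF iv W(1) W(2) order_refl Am])
  moreover have "(\<Inter>w\<in>W. Y w -` A w \<inter> space M) =
      {\<omega>\<in>space M. \<forall>w\<in>W. \<not> (coin w \<omega> \<and> a < xi0 (int w) \<omega> \<and> xi0 (int w) \<omega> \<le> b)}"
    using W(1) by (auto simp: pre)
  moreover have "prob (Y w -` A w \<inter> space M) = 1 - p w * (a powr (-\<alpha>) - b powr (-\<alpha>))" if "w \<in> W" for w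
  proof -
    have "{\<omega>\<in>space M. \<not> (coin w \<omega> \<and> a < xi0 (int w) \<omega> \<and> xi0 (int w) \<omega> \<le> b)} =
        space M - {\<omega>\<in>space M. coin w \<omega> \<and> a < xi0 (int w) \<omega> \<and> xi0 (int w) \<omega> \<le> b}" by auto
    then have "prob (Y w -` A w \<inter> space M) = 1 - prob {\<omega>\<in>space M. coin w \<omega> \<and> a < xi0 (int w) \<omega> \<and> xi0 (int w) \<omega> \<le> b}"
      unfolding pre by (simp add: prob_compl)
    then show ?thesis using pair_prob[OF ab] W(3) that by simp
  qed
  ultimately show ?thesis by simp
qed

end

context L begin

lemma far_incl:
  assumes t: "0 < t" and M0: "1 \<le> M0" and Wb: "\<forall>w\<in>W. 1 \<le> w \<and> w < Nmax"
    and tb: "real Nmax * ln (M0 + 2) < t"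
    and om: "\<forall>z. 1 < xi0 z \<omega>"
    and zm: "is_max_D xi0 coin t \<omega> z" and zK: "z < K"
    and notU: "\<forall>j<K. \<not> M0 < xi0 (int j) \<omega>"
  shows "\<forall>w\<in>W. \<not> (coin w \<omega> \<and> M0 + 1 < xi0 (int w) \<omega> \<and> xi0 (int w) \<omega> \<le> M0 + 2)"
proof (intro ballI notI)
  fix w assume wW: "w \<in> W" and h: "coin w \<omega> \<and> M0 + 1 < xi0 (int w) \<omega> \<and> xi0 (int w) \<omega> \<le> M0 + 2"
  define x where "x = xi0 (int w) \<omega>"
  have x: "M0 + 1 < x" "x \<le> M0 + 2" using h by (auto simp: x_def)
  have wD: "w \<in> Dset xi0 coin \<omega>" using h by (intro Dcoin) simp
  have lnb: "0 \<le> ln (M0 + 2)" using M0 by simp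
  have lnx: "ln x \<le> ln (M0 + 2)" using x M0 by simp
  have "real w / t * ln x \<le> real w / t * ln (M0 + 2)"
    using lnx t by (intro mult_left_mono) auto
  also have "\<dots> \<le> real Nmax / t * ln (M0 + 2)"
    using Wb wW t lnb by (intro mult_right_mono divide_right_mono) auto
  also have "\<dots> < 1"
  proof -
    have "real Nmax / t * ln (M0 + 2) = (real Nmax * ln (M0 + 2)) / t" by simp
    also have "\<dots> < 1" using tb t by simp
    finally show ?thesis .
  qed
  finally have "real w / t * ln x < 1" .
  then have Pw: "M0 < Psi xi0 coin t w \<omega>" using x by (simp add: Psi_nat x_def)
  have "Psi xi0 coin t w \<omega> \<le> Psi xi0 coin t z \<omega>" using zm wD by (auto simp: is_max_D_def)
  moreover have "Psi xi0 coin t z \<omega> \<le> xi0 (int z) \<omega>"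
  proof -
    have "0 \<le> real z / t * ln (xi0 (int z) \<omega>)"
      using om t by (intro mult_nonneg_nonneg) (auto simp: less_imp_le)
    then show ?thesis by (simp add: Psi_nat)
  qed
  ultimately have "M0 < xi0 (int z) \<omega>" using Pw by simp
  then show False using notU zK by blast
qed


lemma far_prob:
  assumes e: "0 < \<epsilon>"
  shows "\<exists>T. \<forall>t\<ge>T. prob {\<omega>\<in>space M. \<exists>z. is_max_D xi0 coin t \<omega> z \<and> z < K} \<le> \<epsilon>"
proof -
  have "eventually (\<lambda>w. 1/2 < p w) sequentially"
    using plim by (rule order_tendstoD(1)) simp
  then obtain N where N: "\<forall>w\<ge>N. 1/2 < p w" by (auto simp: eventually_sequentially)
  define N1 where "N1 = max 1 N"
  have N1: "1 \<le> N1" "\<forall>w\<ge>N1. 1/2 \<le> p w" using N by (auto simp: N1_def less_imp_le)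
  define M0 where "M0 = max 1 (2 * real K / \<epsilon>)"
  have M0: "1 \<le> M0" "2 * real K / \<epsilon> \<le> M0" by (auto simp: M0_def)
  define a where "a = M0 + 1"
  define b where "b = M0 + 2"
  define c0 where "c0 = a powr (-\<alpha>) - b powr (-\<alpha>)"
  have ab: "1 \<le> a" "a \<le> b" using M0 by (auto simp: a_def b_def)
  have c0pos: "0 < c0"
    unfolding c0_def using a2 ab powr_less_mono2_neg[of "-\<alpha>" a b] by (simp add: a_def b_def)
  have c0le: "c0 \<le> 1"
  proof -
    have "a powr (-\<alpha>) \<le> 1 powr (-\<alpha>)" using ab a2 by (intro powr_mono2') auto
    then have "a powr (-\<alpha>) \<le> 1" by simp
    moreover have "0 \<le> b powr (-\<alpha>)" by simp
    ultimately show ?thesis unfolding c0_def by linarith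
  qed
  define q0 where "q0 = 1 - c0 / 2"
  have q0: "0 \<le> q0" "q0 < 1" using c0pos c0le by (auto simp: q0_def)
  have "eventually (\<lambda>n. q0 ^ n < \<epsilon> / 2) sequentially"
    using LIMSEQ_realpow_zero[OF q0] e by (intro order_tendstoD(2)) auto
  then obtain N2 where N2: "\<forall>n\<ge>N2. q0 ^ n < \<epsilon> / 2" by (auto simp: eventually_sequentially)
  define m where "m = max 1 N2"
  have m: "1 \<le> m" "q0 ^ m \<le> \<epsilon> / 2" using N2 by (auto simp: m_def less_imp_le)
  define W where "W = {N1..<N1 + m}"
  have W: "W \<noteq> {}" "finite W" "\<forall>w\<in>W. 1 \<le> w \<and> w < N1 + m" "card W = m"
    using m N1 by (auto simp: W_def)
  define T where "T = max 1 (real (N1 + m) * ln (M0 + 2) + 1)"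
  show ?thesis
  proof (intro exI allI impI)
    fix t assume tT: "T \<le> t"
    then have t: "0 < t" "real (N1 + m) * ln (M0 + 2) < t" by (auto simp: T_def)
    define O0 where "O0 = {\<omega>\<in>space M. \<forall>z. 1 < xi0 z \<omega>}"
    define U1 where "U1 = (\<Union>j\<in>{..<K}. {\<omega>\<in>space M. M0 < xi0 (int j) \<omega>})"
    define NH where "NH = {\<omega>\<in>space M. \<forall>w\<in>W. \<not> (coin w \<omega> \<and> a < xi0 (int w) \<omega> \<and> xi0 (int w) \<omega> \<le> b)}"
    have O0m: "O0 \<in> sets M" unfolding O0_def by measurable
    have U1m: "U1 \<in> sets M" unfolding U1_def by measurable
    have NHm: "NH \<in> sets M"
    proof -
      have "NH = space M \<inter> (\<Inter>w\<in>W. {\<omega>\<in>space M. \<not> (coin w \<omega> \<and> a < xi0 (int w) \<omega> \<and> xi0 (int w) \<omega> \<le> b)})"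
        by (auto simp: NH_def)
      also have "\<dots> \<in> sets M" using W(1,2)
        by (intro sets.Int sets.top sets.finite_INT) (auto, measurable)
      finally show ?thesis .
    qed
    have incl: "{\<omega>\<in>space M. \<exists>z. is_max_D xi0 coin t \<omega> z \<and> z < K} \<subseteq> ((space M - O0) \<union> U1) \<union> NH"
    proof
      fix \<omega> assume "\<omega> \<in> {\<omega>\<in>space M. \<exists>z. is_max_D xi0 coin t \<omega> z \<and> z < K}"
      then obtain z where sp: "\<omega> \<in> space M" and zm: "is_max_D xi0 coin t \<omega> z" and zK: "z < K" by blast
      show "\<omega> \<in> ((space M - O0) \<union> U1) \<union> NH"
      proof (cases "\<omega> \<in> O0 \<and> \<omega> \<notin> U1")
        case False then show ?thesis using sp by blast
      next
        case True
        then have om: "\<forall>z. 1 < xi0 z \<omega>" and nU: "\<forall>j<K. \<not> M0 < xi0 (int j) \<omega>"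
          using sp by (auto simp: O0_def U1_def)
        have "\<forall>w\<in>W. \<not> (coin w \<omega> \<and> M0 + 1 < xi0 (int w) \<omega> \<and> xi0 (int w) \<omega> \<le> M0 + 2)"
          by (rule far_incl[OF t(1) M0(1) W(3) t(2) om zm zK nU])
        then show ?thesis using sp by (simp add: NH_def a_def b_def)
      qed
    qed
    have pO: "prob (space M - O0) = 0"
    proof -
      have "prob {\<omega>\<in>space M. \<not> (\<forall>z. 1 < xi0 z \<omega>)} = 0"
        using AE_all_gt1 by (intro prob_eq_0_AE) simp
      moreover have "space M - O0 = {\<omega>\<in>space M. \<not> (\<forall>z. 1 < xi0 z \<omega>)}" by (auto simp: O0_def)
      ultimately show ?thesis by simp
    qed
    have pU: "prob U1 \<le> \<epsilon> / 2"
    proof -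
      have "prob U1 \<le> (\<Sum>j\<in>{..<K}. prob {\<omega>\<in>space M. M0 < xi0 (int j) \<omega>})"
        unfolding U1_def by (intro finite_measure_subadditive_finite) auto
      also have "\<dots> = real K * M0 powr (-\<alpha>)" using M0 by (simp add: tail_gt)
      also have "\<dots> \<le> real K * M0 powr (-1)"
        using M0 a2 by (intro mult_left_mono powr_mono) auto
      also have "\<dots> = real K / M0" using M0(1) by (simp add: powr_minus divide_inverse)
      also have "\<dots> \<le> \<epsilon> / 2"
      proof -
        have "2 * real K \<le> M0 * \<epsilon>" using M0(2) e by (simp add: field_simps)
        then show ?thesis using M0(1) e by (simp add: field_simps)
      qed
      finally show ?thesis .
    qed
    have pNH: "prob NH \<le> \<epsilon> / 2"
    proof -
      have "prob NH = (\<Prod>w\<in>W. 1 - p w * c0)"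
        unfolding NH_def c0_def using W by (intro nohit_prob ab) auto
      also have "\<dots> \<le> (\<Prod>w\<in>W. q0)"
      proof (rule prod_mono)
        fix w assume wW: "w \<in> W"
        then have pw: "1/2 \<le> p w" "p w \<le> 1" using N1 p01 by (auto simp: W_def)
        have "p w * c0 \<le> 1 * 1" using pw c0le c0pos by (intro mult_mono) auto
        moreover have "1/2 * c0 \<le> p w * c0" using pw c0pos by (intro mult_right_mono) auto
        ultimately show "0 \<le> 1 - p w * c0 \<and> 1 - p w * c0 \<le> q0" by (simp add: q0_def)
      qed
      also have "\<dots> = q0 ^ m" using W(4) by simp
      finally show ?thesis using m(2) by simp
    qed
    have "prob {\<omega>\<in>space M. \<exists>z. is_max_D xi0 coin t \<omega> z \<and> z < K} \<le> prob (((space M - O0) \<union> U1) \<union> NH)"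
      using incl O0m U1m NHm by (intro finite_measure_mono) auto
    also have "\<dots> \<le> prob ((space M - O0) \<union> U1) + prob NH"
      using O0m U1m NHm by (intro measure_Un_le) auto
    also have "\<dots> \<le> (prob (space M - O0) + prob U1) + prob NH"
      using O0m U1m by (intro add_right_mono measure_Un_le) auto
    also have "\<dots> \<le> \<epsilon>" using pO pU pNH by simp
    finally show "prob {\<omega>\<in>space M. \<exists>z. is_max_D xi0 coin t \<omega> z \<and> z < K} \<le> \<epsilon>" .
  qed
qed

end

context L begin

lemma main_eps:
  assumes e: "0 < \<epsilon>"
  shows "\<exists>T. \<forall>t\<ge>T. 1 - \<epsilon> \<le> prob {\<omega>\<in>space M. good_event xi0 coin \<alpha> t \<omega>}"
proof -
  define C where "C = real (2 * nat \<lceil>\<alpha>\<rceil> + 1)"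
  have C: "0 < C" by (simp add: C_def)
  define \<delta> where "\<delta> = \<epsilon> / (2 * C)"
  have d: "0 < \<delta>" using e C by (simp add: \<delta>_def)
  have dC: "\<delta> * C = \<epsilon> / 2" using C by (simp add: \<delta>_def field_simps)
  have "eventually (\<lambda>y. 1 - \<delta> < p y) sequentially"
    using plim d by (intro order_tendstoD(1)) auto
  then obtain N where N: "\<forall>y\<ge>N. 1 - \<delta> < p y" by (auto simp: eventually_sequentially)
  define Nd where "Nd = max 1 N"
  have Nd: "1 \<le> Nd" "\<forall>y\<ge>Nd. 1 - p y \<le> \<delta>" using N by (auto simp: Nd_def less_imp_le)
  define K where "K = Nd + nat \<lceil>\<alpha>\<rceil> + 1"
  have K: "real Nd + \<alpha> \<le> real K" unfolding K_def by linarith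
  obtain T where T: "\<forall>t\<ge>T. prob {\<omega>\<in>space M. \<exists>z. is_max_D xi0 coin t \<omega> z \<and> z < K} \<le> \<epsilon> / 2"
    using far_prob[of "\<epsilon> / 2" K] e by auto
  show ?thesis
  proof (intro exI allI impI)
    fix t assume tT: "max 1 T \<le> t"
    then have t: "0 < t" and tT': "T \<le> t" by auto
    define G where "G = {\<omega>\<in>space M. good_event xi0 coin \<alpha> t \<omega>}"
    define FB where "FB = {\<omega>\<in>space M. \<exists>z. is_max_D xi0 coin t \<omega> z \<and> z < K}"
    define UB where "UB = (\<Union>y\<in>{Nd..}. {\<omega>\<in>space M. \<not> coin y \<omega> \<and> (AYp \<alpha> xi0 coin t y \<omega> \<and> NTp xi0 t \<omega>)})"
    have Gm: "G \<in> sets M" unfolding G_def by (rule good_meas)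
    have FBm: "FB \<in> sets M"
    proof -
      have "FB = (\<Union>z\<in>{..<K}. {\<omega>\<in>space M. is_max_D xi0 coin t \<omega> z})" by (auto simp: FB_def)
      also have "\<dots> \<in> sets M" by (intro sets.finite_UN ismax_meas) auto
      finally show ?thesis .
    qed
    have UBm: "UB \<in> sets M" unfolding UB_def by (intro sets.countable_UN'' Bd_m) auto
    have AEgood: "AE \<omega> in M. (\<forall>z. 1 < xi0 z \<omega>) \<and> NTp xi0 t \<omega> \<and> finite {z. 1 < Psi xi0 coin t z \<omega>}"
      using AE_all_gt1 AE_NT[OF t] AE_fin[OF t] by eventually_elim auto
    then obtain N0 where N0: "{\<omega>\<in>space M. \<not> ((\<forall>z. 1 < xi0 z \<omega>) \<and> NTp xi0 t \<omega> \<and> finite {z. 1 < Psi xi0 coin t z \<omega>})} \<subseteq> N0"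
      "emeasure M N0 = 0" "N0 \<in> sets M" by (rule AE_E)
    have incl: "space M - G \<subseteq> (N0 \<union> FB) \<union> UB"
    proof
      fix \<omega> assume w: "\<omega> \<in> space M - G"
      show "\<omega> \<in> (N0 \<union> FB) \<union> UB"
      proof (rule ccontr)
        assume nin: "\<omega> \<notin> (N0 \<union> FB) \<union> UB"
        have sp: "\<omega> \<in> space M" using w by simp
        then have P: "(\<forall>z. 1 < xi0 z \<omega>) \<and> NTp xi0 t \<omega> \<and> finite {z. 1 < Psi xi0 coin t z \<omega>}"
          using N0(1) nin by blast
        have far: "\<forall>z. is_max_D xi0 coin t \<omega> z \<longrightarrow> K \<le> z"
          using nin sp by (auto simp: FB_def not_less)
        have nb: "\<forall>y\<ge>Nd. coin y \<omega> \<or> \<not> AYp \<alpha> xi0 coin t y \<omega>"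
          using nin sp P by (auto simp: UB_def)
        have "good_event xi0 coin \<alpha> t \<omega>"
          using P far K nb by (intro good_det[where K=K and Nd=Nd]) auto
        then show False using w sp by (simp add: G_def)
      qed
    qed
    have pN0: "prob N0 = 0" using N0(2) by (simp add: emeasure_eq_measure)
    have pFB: "prob FB \<le> \<epsilon> / 2" using T tT' by (simp add: FB_def)
    have pUB: "prob UB \<le> \<epsilon> / 2"
    proof -
      have "emeasure M UB \<le> ennreal \<delta> * of_nat (2 * nat \<lceil>\<alpha>\<rceil> + 1)"
        unfolding UB_def by (rule sum_bound[OF less_imp_le[OF d] Nd])
      also have "\<dots> = ennreal (\<delta> * C)" using d by (simp add: C_def ennreal_mult ennreal_of_nat_eq_real_of_nat)
      finally have "ennreal (prob UB) \<le> ennreal (\<delta> * C)" by (simp add: emeasure_eq_measure)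
      then have "prob UB \<le> \<delta> * C" using d C by (simp add: ennreal_le_iff)
      then show ?thesis using dC by simp
    qed
    have "prob (space M - G) \<le> prob ((N0 \<union> FB) \<union> UB)"
      using incl N0(3) FBm UBm by (intro finite_measure_mono) auto
    also have "\<dots> \<le> prob (N0 \<union> FB) + prob UB"
      using N0(3) FBm UBm by (intro measure_Un_le) auto
    also have "\<dots> \<le> (prob N0 + prob FB) + prob UB"
      using N0(3) FBm by (intro add_right_mono measure_Un_le) auto
    also have "\<dots> \<le> \<epsilon>" using pN0 pFB pUB by simp
    finally have "prob (space M - G) \<le> \<epsilon>" .
    then show "1 - \<epsilon> \<le> prob {\<omega>\<in>space M. good_event xi0 coin \<alpha> t \<omega>}"
      using prob_compl[OF Gm] by (simp add: G_def)
  qed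
qed

lemma main: "((\<lambda>t. prob {\<omega>\<in>space M. good_event xi0 coin \<alpha> t \<omega>}) \<longlongrightarrow> 1) at_top"
proof (rule tendstoI)
  fix e :: real assume e: "0 < e"
  obtain T where T: "\<forall>t\<ge>T. 1 - e / 2 \<le> prob {\<omega>\<in>space M. good_event xi0 coin \<alpha> t \<omega>}"
    using main_eps[of "e / 2"] e by auto
  show "eventually (\<lambda>t. dist (prob {\<omega>\<in>space M. good_event xi0 coin \<alpha> t \<omega>}) 1 < e) at_top"
    using eventually_ge_at_top[of T]
  proof eventually_elim
    case (elim t)
    have a: "prob {\<omega>\<in>space M. good_event xi0 coin \<alpha> t \<omega>} \<le> 1" by (rule prob_le_1)
    have b: "1 - e / 2 \<le> prob {\<omega>\<in>space M. good_event xi0 coin \<alpha> t \<omega>}" using T elim by blast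
    show ?case unfolding dist_real_def abs_less_iff using a b e by linarith
  qed
qed

end

theorem lemma6p1:
  fixes M :: "'a measure" and \<alpha> :: real and p :: "nat \<Rightarrow> real"
    and xi0 :: "int \<Rightarrow> 'a \<Rightarrow> real" and coin :: "nat \<Rightarrow> 'a \<Rightarrow> bool"
  assumes "prob_space M"
    and "\<alpha> \<ge> 2"
    and "\<forall>n. 0 \<le> p n \<and> p n \<le> 1"
    and "\<exists>N. \<forall>m n. N \<le> m \<and> m \<le> n \<longrightarrow> p m \<le> p n"
    and "p \<longlonglongrightarrow> 1"
    and "prob_space.indep_vars M (\<lambda>_. borel)
           (\<lambda>i. case i of Inl z \<Rightarrow> xi0 z | Inr n \<Rightarrow> (\<lambda>\<omega>. of_bool (coin n \<omega>)))
           (UNIV :: (int + nat) set)"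
    and "\<forall>z. \<forall>x\<ge>1. measure M {\<omega> \<in> space M. xi0 z \<omega> > x} = x powr (- \<alpha>)"
    and "\<forall>n\<ge>1. measure M {\<omega> \<in> space M. coin n \<omega>} = p n"
  shows "((\<lambda>t. measure M {\<omega> \<in> space M. good_event xi0 coin \<alpha> t \<omega>}) \<longlongrightarrow> 1) at_top"
proof -
  have "L M \<alpha> p xi0 coin"
    unfolding L_def L_axioms_def using assms by auto
  then interpret L M \<alpha> p xi0 coin .
  show ?thesis by (rule main)
qed

end
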